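(* Let $p\ge5$ and let $\rho$ be the rightmost assignment on the white metallic tree. For every node $\nu$ of $\mathcal W_\rho$, the integer whose nzm-code is the nzm-code of $\nu$ followed by the digit $1$ (the successor of $\nu$) is a son of $\nu$ in $\mathcal W_\rho$, and no other son of $\nu$ in $\mathcal W_\rho$ has an nzm-code ending with $1$. Moreover, $\rho$ is the unique assignment $\alpha$ such that, for every node $\nu$, the successor of $\nu$ is a son of $\nu$ in $\mathcal W_\alpha$.
   Context: Fix $p\ge5$. Metallic numbers: $m_{-1}=0$, $m_0=1$, $m_{n+2}=(p-2)m_{n+1}-m_n$. With $x=p-2$, $d=p-3$, the nzm-code of a positive integer $n$ is the unique word $a_k\cdots a_0$ over $\{1,\dots,p-2\}$ with $n=\sum a_im_i$ containing no factor $x\,d^j\,x$ ($j\ge0$). White metallic tree under an assignment $\alpha$, $\mathcal W_\alpha$: nodes are the positive integers, each black or white; root $1$ is white; nodes are processed in increasing order, node $\nu$ receives $p-2$ sons if white and $p-3$ sons if black, namely the smallest integers not yet used, in increasing order; an assignment specifies for each node the position (leftmost $=1$) of its unique black son among its sons, other sons being white. The rightmost assignment $\rho$ always puts the black son at the last position. *)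

theory Defs
  imports Main
begin

text \<open>Metallic numbers, shifted: metallic p i = m_i for i >= 0 (m_0 = 1, m_1 = p-2).\<close>
fun metallic :: "nat \<Rightarrow> nat \<Rightarrow> int" where
  "metallic p 0 = 1"
| "metallic p (Suc 0) = int p - 2"
| "metallic p (Suc (Suc n)) = (int p - 2) * metallic p (Suc n) - metallic p n"

text \<open>Words a_k ... a_0 are stored little-endian: the list [a_0, a_1, ..., a_k].\<close>
definition word_val :: "nat \<Rightarrow> nat list \<Rightarrow> int" where
  "word_val p w = (\<Sum>i<length w. int (w ! i) * metallic p i)"

text \<open>w contains a factor x d^j x with x = p-2, d = p-3, j >= 0.\<close>
definition has_forbidden :: "nat \<Rightarrow> nat list \<Rightarrow> bool" where
  "has_forbidden p w = (\<exists>i j. i < j \<and> j < length w \<and> w ! i = p - 2 \<and> w ! j = p - 2 \<and>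
       (\<forall>k. i < k \<and> k < j \<longrightarrow> w ! k = p - 3))"

definition nzm_word :: "nat \<Rightarrow> nat list \<Rightarrow> bool" where
  "nzm_word p w = (w \<noteq> [] \<and> set w \<subseteq> {1..p-2} \<and> \<not> has_forbidden p w)"

definition nzm_code :: "nat \<Rightarrow> nat \<Rightarrow> nat list" where
  "nzm_code p n = (THE w. nzm_word p w \<and> word_val p w = int n)"

text \<open>Successor: the positive integer whose nzm-code is code(nu) followed by the digit 1
  (i.e. the new last digit a_0 is 1, little-endian: 1 prepended).\<close>
definition nzm_succ :: "nat \<Rightarrow> nat \<Rightarrow> nat" where
  "nzm_succ p \<nu> = (THE n. 0 < n \<and> nzm_code p n = 1 # nzm_code p \<nu>)"

text \<open>White metallic tree under assignment alpha. build p alpha k = (N, c) after processing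
  nodes 1..k: N is the smallest unused integer, c gives colours (True = white) of nodes < N.\<close>
primrec build :: "nat \<Rightarrow> (nat \<Rightarrow> nat) \<Rightarrow> nat \<Rightarrow> nat \<times> (nat \<Rightarrow> bool)" where
  "build p \<alpha> 0 = (2, \<lambda>v. v = 1)"
| "build p \<alpha> (Suc k) =
     (let (N, c) = build p \<alpha> k;
          dg = (if c (Suc k) then p - 2 else p - 3)
      in (N + dg, \<lambda>v. if N \<le> v \<and> v < N + dg then v \<noteq> N + \<alpha> (Suc k) - 1 else c v))"

definition white :: "nat \<Rightarrow> (nat \<Rightarrow> nat) \<Rightarrow> nat \<Rightarrow> bool" where
  "white p \<alpha> \<nu> = snd (build p \<alpha> \<nu>) \<nu>"

definition nsons :: "nat \<Rightarrow> (nat \<Rightarrow> nat) \<Rightarrow> nat \<Rightarrow> nat" where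
  "nsons p \<alpha> \<nu> = fst (build p \<alpha> \<nu>) - fst (build p \<alpha> (\<nu> - 1))"

definition is_son :: "nat \<Rightarrow> (nat \<Rightarrow> nat) \<Rightarrow> nat \<Rightarrow> nat \<Rightarrow> bool" where
  "is_son p \<alpha> \<nu> \<mu> = (1 \<le> \<nu> \<and> fst (build p \<alpha> (\<nu> - 1)) \<le> \<mu> \<and> \<mu> < fst (build p \<alpha> \<nu>))"

text \<open>An assignment: position (leftmost = 1) of the black son among the sons of each node nu >= 1.\<close>
definition valid_assignment :: "nat \<Rightarrow> (nat \<Rightarrow> nat) \<Rightarrow> bool" where
  "valid_assignment p \<alpha> = (\<forall>\<nu>\<ge>1. 1 \<le> \<alpha> \<nu> \<and> \<alpha> \<nu> \<le> nsons p \<alpha> \<nu>)"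

definition is_rightmost :: "nat \<Rightarrow> (nat \<Rightarrow> nat) \<Rightarrow> bool" where
  "is_rightmost p \<alpha> = (\<forall>\<nu>\<ge>1. \<alpha> \<nu> = nsons p \<alpha> \<nu>)"

end

theory Submission
  imports Defs
begin

lemma m_basic:
  assumes "p \<ge> 5"
  shows "metallic p i \<ge> 1 \<and> metallic p (Suc i) - (int p - 3) * metallic p i \<ge> 1"
proof (induction i)
  case 0
  then show ?case using assms by simp
next
  case (Suc i)
  have h1: "metallic p (Suc i) \<ge> 1 + (int p - 3) * metallic p i" using Suc by simp
  have h2: "(int p - 4) * metallic p i \<ge> 0" using Suc assms by simp
  have "metallic p (Suc (Suc i)) - (int p - 3) * metallic p (Suc i) = metallic p (Suc i) - metallic p i"
    by (simp add: algebra_simps)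
  also have "\<dots> \<ge> 1" using h1 h2 by (simp add: algebra_simps)
  finally show ?case using h1 h2 Suc by (simp add: algebra_simps)
qed

lemma m_pos: "p \<ge> 5 \<Longrightarrow> metallic p i \<ge> 1"
  using m_basic by blast

lemma m_step: "p \<ge> 5 \<Longrightarrow> metallic p (Suc i) \<ge> (int p - 3) * metallic p i + 1"
  using m_basic[of p i] by simp

definition SS :: "nat \<Rightarrow> nat \<Rightarrow> int" where
  "SS p k = (\<Sum>i<k. metallic p i)"

lemma SS_0[simp]: "SS p 0 = 0" by (simp add: SS_def)
lemma SS_Suc: "SS p (Suc k) = SS p k + metallic p k" by (simp add: SS_def)

lemma SS_nonneg: "p \<ge> 5 \<Longrightarrow> SS p k \<ge> 0"
  unfolding SS_def using m_pos by (simp add: sum_nonneg order_trans[OF zero_le_one])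

lemma SS_mono: assumes "p \<ge> 5" "k \<le> l" shows "SS p k \<le> SS p l"
  using assms(2)
proof (induction l)
  case 0 then show ?case by simp
next
  case (Suc l)
  then show ?case using m_pos[OF assms(1), of l] SS_Suc[of p l]
    by (cases "k = Suc l") auto
qed

lemma SS_ge: "p \<ge> 5 \<Longrightarrow> SS p k \<ge> int k"
proof (induction k)
  case 0 then show ?case by simp
next
  case (Suc k) then show ?case using m_pos[of p k] SS_Suc[of p k] by simp
qed

lemma SS_Q: assumes "p \<ge> 5"
  shows "(int p - 4) * SS p (Suc k) = metallic p (Suc k) - metallic p k - 1"
proof (induction k)
  case 0 then show ?case by (simp add: SS_def)
next
  case (Suc k)
  have "(int p - 4) * SS p (Suc (Suc k)) = (int p - 4) * SS p (Suc k) + (int p - 4) * metallic p (Suc k)"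
    by (simp add: SS_Suc algebra_simps)
  also have "\<dots> = metallic p (Suc (Suc k)) - metallic p (Suc k) - 1"
    using Suc by (simp add: algebra_simps)
  finally show ?case .
qed

lemma SS_Id: assumes "p \<ge> 5"
  shows "(int p - 2) * metallic p k + (int p - 3) * SS p k + 1 = SS p (Suc (Suc k))"
proof (cases k)
  case 0 then show ?thesis by (simp add: SS_def)
next
  case (Suc k')
  have q: "(int p - 4) * SS p k = metallic p k - metallic p k' - 1" using SS_Q[OF assms, of k'] Suc by simp
  have "SS p (Suc (Suc k)) = SS p k + metallic p k + metallic p (Suc k)" by (simp add: SS_Suc)
  also have "metallic p (Suc k) = (int p - 2) * metallic p k - metallic p k'" using Suc by simp
  finally show ?thesis using q by (simp add: algebra_simps)
qed

fun xbot :: "nat \<Rightarrow> nat list \<Rightarrow> bool" where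
  "xbot p [] = False"
| "xbot p (a # w) = (a = p - 2 \<or> (a = p - 3 \<and> xbot p w))"

fun hf :: "nat \<Rightarrow> nat list \<Rightarrow> bool" where
  "hf p [] = False"
| "hf p (a # w) = (hf p w \<or> (a = p - 2 \<and> xbot p w))"

fun xtop :: "nat \<Rightarrow> nat list \<Rightarrow> bool" where
  "xtop p [] = False"
| "xtop p (a # w) = (xtop p w \<or> (a = p - 2 \<and> (\<forall>b\<in>set w. b = p - 3)))"

lemma xbot_idx: "xbot p w \<longleftrightarrow> (\<exists>j<length w. w ! j = p - 2 \<and> (\<forall>k<j. w ! k = p - 3))"
proof (induction w)
  case Nil then show ?case by simp
next
  case (Cons a w)
  show ?case
  proof
    assume "xbot p (a # w)"
    then consider "a = p - 2" | "a = p - 3" "xbot p w" by auto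
    then show "\<exists>j<length (a # w). (a # w) ! j = p - 2 \<and> (\<forall>k<j. (a # w) ! k = p - 3)"
    proof cases
      case 1 then show ?thesis by (intro exI[of _ 0]) auto
    next
      case 2
      then obtain j where j: "j < length w" "w ! j = p - 2" "\<forall>k<j. w ! k = p - 3" using Cons by auto
      show ?thesis
      proof (intro exI[of _ "Suc j"] conjI allI impI)
        fix k assume "k < Suc j"
        then show "(a # w) ! k = p - 3" using j 2 by (cases k) auto
      qed (use j in auto)
    qed
  next
    assume "\<exists>j<length (a # w). (a # w) ! j = p - 2 \<and> (\<forall>k<j. (a # w) ! k = p - 3)"
    then obtain j where j: "j < length (a # w)" "(a # w) ! j = p - 2" "\<forall>k<j. (a # w) ! k = p - 3" by blast
    show "xbot p (a # w)"
    proof (cases j)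
      case 0 then show ?thesis using j by simp
    next
      case (Suc j')
      have "a = p - 3" using j(3)[rule_format, of 0] Suc by simp
      moreover have "\<forall>k<j'. w ! k = p - 3"
        using j(3) Suc by (metis Suc_less_eq nth_Cons_Suc)
      then have "xbot p w" unfolding Cons.IH using j Suc by auto
      ultimately show ?thesis by simp
    qed
  qed
qed

lemma hfidx_Nil: "\<not> has_forbidden p []" by (simp add: has_forbidden_def)

lemma hfidx_Cons: "has_forbidden p (a # w) \<longleftrightarrow> has_forbidden p w \<or> (a = p - 2 \<and> xbot p w)"
proof
  assume "has_forbidden p (a # w)"
  then obtain i j where ij: "i < j" "j < length (a # w)" "(a # w) ! i = p - 2" "(a # w) ! j = p - 2"
    "\<forall>k. i < k \<and> k < j \<longrightarrow> (a # w) ! k = p - 3" unfolding has_forbidden_def by blast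
  show "has_forbidden p w \<or> (a = p - 2 \<and> xbot p w)"
  proof (cases i)
    case 0
    obtain j' where j': "j = Suc j'" using ij(1) 0 by (cases j) auto
    have "xbot p w" unfolding xbot_idx
    proof (intro exI[of _ j'] conjI allI impI)
      fix k assume "k < j'" then show "w ! k = p - 3" using ij(5)[rule_format, of "Suc k"] 0 j' by simp
    qed (use ij j' in auto)
    then show ?thesis using ij 0 by simp
  next
    case (Suc i')
    obtain j' where j': "j = Suc j'" using ij(1) Suc by (cases j) auto
    have "\<forall>k. i' < k \<and> k < j' \<longrightarrow> w ! k = p - 3"
      using ij(5) Suc j' by (metis Suc_less_eq nth_Cons_Suc)
    then have "has_forbidden p w" unfolding has_forbidden_def
      by (intro exI[of _ i'] exI[of _ j']) (use ij Suc j' in auto)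
    then show ?thesis by simp
  qed
next
  assume "has_forbidden p w \<or> (a = p - 2 \<and> xbot p w)"
  then show "has_forbidden p (a # w)"
  proof
    assume "has_forbidden p w"
    then obtain i j where ij: "i < j" "j < length w" "w ! i = p - 2" "w ! j = p - 2"
      "\<forall>k. i < k \<and> k < j \<longrightarrow> w ! k = p - 3" unfolding has_forbidden_def by blast
    have "\<forall>k. Suc i < k \<and> k < Suc j \<longrightarrow> (a # w) ! k = p - 3"
      using ij(5) by (metis Suc_less_eq nth_Cons_Suc less_imp_Suc_add add_Suc_right)
    then show ?thesis unfolding has_forbidden_def
      by (intro exI[of _ "Suc i"] exI[of _ "Suc j"]) (use ij in auto)
  next
    assume "a = p - 2 \<and> xbot p w"
    then obtain j where j: "a = p - 2" "j < length w" "w ! j = p - 2" "\<forall>k<j. w ! k = p - 3"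
      unfolding xbot_idx by blast
    have "\<forall>k. 0 < k \<and> k < Suc j \<longrightarrow> (a # w) ! k = p - 3"
      using j(4) by (metis Suc_less_eq nth_Cons_Suc gr0_implies_Suc)
    then show ?thesis unfolding has_forbidden_def
      by (intro exI[of _ 0] exI[of _ "Suc j"]) (use j in auto)
  qed
qed

lemma hf_eq: "has_forbidden p w = hf p w"
  by (induction w) (simp_all add: hfidx_Nil hfidx_Cons)

lemma xbot_snoc: "xbot p (w @ [a]) \<longleftrightarrow> xbot p w \<or> ((\<forall>b\<in>set w. b = p - 3) \<and> a = p - 2)"
  by (induction w) auto

lemma hf_snoc: "hf p (w @ [a]) \<longleftrightarrow> hf p w \<or> (a = p - 2 \<and> xtop p w)"
  by (induction w) (auto simp: xbot_snoc)

lemma xtop_snoc: "xtop p (w @ [a]) \<longleftrightarrow> a = p - 2 \<or> (a = p - 3 \<and> xtop p w)"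
  by (induction w) auto

definition WW :: "nat \<Rightarrow> nat list \<Rightarrow> bool" where
  "WW p w = (set w \<subseteq> {1..p-2} \<and> \<not> hf p w)"

lemma nzm_word_WW: "nzm_word p w \<longleftrightarrow> WW p w \<and> w \<noteq> []"
  by (auto simp: nzm_word_def WW_def hf_eq)

lemma WW_snoc: "WW p (w @ [a]) \<longleftrightarrow> WW p w \<and> 1 \<le> a \<and> a \<le> p - 2 \<and> \<not> (a = p - 2 \<and> xtop p w)"
  by (auto simp: WW_def hf_snoc)

lemma WW_Cons: "WW p (a # w) \<longleftrightarrow> WW p w \<and> 1 \<le> a \<and> a \<le> p - 2 \<and> \<not> (a = p - 2 \<and> xbot p w)"
  by (auto simp: WW_def)

lemma val_Nil[simp]: "word_val p [] = 0" by (simp add: word_val_def)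

lemma val_snoc: "word_val p (w @ [a]) = word_val p w + int a * metallic p (length w)"
  by (simp add: word_val_def nth_append)

lemma val_Cons: "word_val p (a # w) = int a + (\<Sum>i<length w. int (w ! i) * metallic p (Suc i))"
  unfolding word_val_def by (subst length_Cons, subst sum.lessThan_Suc_shift) simp

lemma val_Cons_diff: "word_val p (a # w) = word_val p (b # w) + int a - int b"
  by (simp add: val_Cons)

lemma val_lower: "p \<ge> 5 \<Longrightarrow> WW p w \<Longrightarrow> word_val p w \<ge> SS p (length w)"
proof (induction w rule: rev_induct)
  case Nil then show ?case by simp
next
  case (snoc a w)
  have "WW p w" "1 \<le> a" using snoc.prems WW_snoc by auto
  have "int a * metallic p (length w) \<ge> 1 * metallic p (length w)"
    using \<open>1 \<le> a\<close> m_pos[OF snoc.prems(1), of "length w"] by (intro mult_right_mono) auto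
  then show ?case using snoc.IH[OF snoc.prems(1) \<open>WW p w\<close>] by (simp add: val_snoc SS_Suc)
qed

lemma val_upper_aux:
  assumes p: "p \<ge> 5"
  shows "WW p w \<Longrightarrow> word_val p w \<le> SS p (Suc (length w)) - 1 \<and>
     (\<not> xtop p w \<longrightarrow> word_val p w \<le> (int p - 3) * SS p (length w))"
proof (induction w rule: rev_induct)
  case Nil then show ?case by (simp add: SS_def)
next
  case (snoc a w)
  define k where "k = length w"
  define m where "m = metallic p k"
  have w: "WW p w" and a1: "1 \<le> a" and a2: "a \<le> p - 2" and ax: "\<not> (a = p - 2 \<and> xtop p w)"
    using snoc.prems WW_snoc by auto
  have IH1: "word_val p w \<le> SS p (Suc k) - 1" and IH2: "\<not> xtop p w \<Longrightarrow> word_val p w \<le> (int p - 3) * SS p k"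
    using snoc.IH[OF w] k_def by auto
  have val: "word_val p (w @ [a]) = word_val p w + int a * m" by (simp add: val_snoc k_def m_def)
  have mpos: "m \<ge> 1" using m_pos[OF p] m_def by simp
  have Sk: "SS p k \<ge> 0" using SS_nonneg[OF p] by simp
  have S1: "SS p (Suc k) = SS p k + m" by (simp add: SS_Suc m_def)
  have S2: "SS p (Suc (Suc k)) = SS p (Suc k) + metallic p (Suc k)" by (simp add: SS_Suc)
  have mst: "metallic p (Suc k) \<ge> (int p - 3) * m + 1" using m_step[OF p] m_def by simp
  have Id: "(int p - 2) * m + (int p - 3) * SS p k + 1 = SS p (Suc (Suc k))" using SS_Id[OF p] m_def by simp
  have part1: "word_val p (w @ [a]) \<le> SS p (Suc (Suc k)) - 1"
  proof (cases "a = p - 2")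
    case True
    then have "\<not> xtop p w" using ax by simp
    then show ?thesis using IH2 val Id True p by (simp add: of_nat_diff)
  next
    case False
    then have "int a \<le> int p - 3" using a2 p by simp
    then have "int a * m \<le> (int p - 3) * m" using mpos by (intro mult_right_mono) auto
    then show ?thesis using IH1 val S2 mst by simp
  qed
  have part2: "\<not> xtop p (w @ [a]) \<longrightarrow> word_val p (w @ [a]) \<le> (int p - 3) * SS p (Suc k)"
  proof
    assume nx: "\<not> xtop p (w @ [a])"
    then have an: "a \<noteq> p - 2" and ad: "a = p - 3 \<Longrightarrow> \<not> xtop p w" by (auto simp: xtop_snoc)
    show "word_val p (w @ [a]) \<le> (int p - 3) * SS p (Suc k)"
    proof (cases "a = p - 3")
      case True
      then show ?thesis using IH2[OF ad[OF True]] val S1 p by (simp add: of_nat_diff algebra_simps)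
    next
      case False
      then have "int a \<le> int p - 4" using a2 an p by simp
      then have "int a * m \<le> (int p - 4) * m" using mpos by (intro mult_right_mono) auto
      moreover have "(int p - 4) * SS p k \<ge> 0" using Sk p by simp
      ultimately show ?thesis using IH1 val S1 by (simp add: algebra_simps)
    qed
  qed
  show ?case using part1 part2 k_def by simp
qed

lemma val_upper: "p \<ge> 5 \<Longrightarrow> WW p w \<Longrightarrow> word_val p w \<le> SS p (Suc (length w)) - 1"
  using val_upper_aux by blast

lemma val_upper_xtop: "p \<ge> 5 \<Longrightarrow> WW p w \<Longrightarrow> \<not> xtop p w \<Longrightarrow> word_val p w \<le> (int p - 3) * SS p (length w)"
  using val_upper_aux by blast

lemma val_len_less:
  assumes p: "p \<ge> 5" and u: "WW p u" and v: "WW p v" and l: "length u < length v"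
  shows "word_val p u < word_val p v"
proof -
  have "word_val p u \<le> SS p (Suc (length u)) - 1" using val_upper[OF p u] .
  also have "\<dots> < SS p (length v)" using SS_mono[OF p, of "Suc (length u)" "length v"] l by simp
  also have "\<dots> \<le> word_val p v" using val_lower[OF p v] .
  finally show ?thesis .
qed

lemma top_less:
  assumes p: "p \<ge> 5" and u: "WW p (u @ [a])" and v: "WW p (v @ [b])" and l: "length u = length v"
    and ab: "a < b"
  shows "word_val p (u @ [a]) < word_val p (v @ [b])"
proof -
  define k where "k = length u"
  define m where "m = metallic p k"
  have mpos: "m \<ge> 1" using m_pos[OF p] m_def by simp
  have "WW p u" "WW p v" using u v WW_snoc by auto
  have "word_val p u \<le> SS p (Suc k) - 1" using val_upper[OF p \<open>WW p u\<close>] k_def by simp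
  moreover have "word_val p v \<ge> SS p k" using val_lower[OF p \<open>WW p v\<close>] k_def l by simp
  moreover have "int a * m + m \<le> int b * m"
  proof -
    have "int a + 1 \<le> int b" using ab by simp
    then have "(int a + 1) * m \<le> int b * m" using mpos by (intro mult_right_mono) auto
    then show ?thesis by (simp add: algebra_simps)
  qed
  ultimately show ?thesis using l by (simp add: val_snoc k_def m_def SS_Suc)
qed

lemma WW_butlast: "WW p (u @ [a]) \<Longrightarrow> WW p u" using WW_snoc by auto

lemma val_inj_len:
  assumes p: "p \<ge> 5"
  shows "\<forall>u v. length u = n \<longrightarrow> length v = n \<longrightarrow> WW p u \<longrightarrow> WW p v \<longrightarrow> word_val p u = word_val p v \<longrightarrow> u = v"
proof (induction n)
  case 0 then show ?case by simp
next
  case (Suc n)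
  show ?case
  proof (intro allI impI)
    fix u v :: "nat list"
    assume lu: "length u = Suc n" and lv: "length v = Suc n" and u: "WW p u" and v: "WW p v"
      and eq: "word_val p u = word_val p v"
    obtain u' a where ua: "u = u' @ [a]" using lu by (cases u rule: rev_exhaust) auto
    obtain v' b where vb: "v = v' @ [b]" using lv by (cases v rule: rev_exhaust) auto
    have l: "length u' = length v'" using lu lv ua vb by simp
    have "\<not> a < b" using top_less[OF p, of u' a v' b] u v ua vb l eq by auto
    moreover have "\<not> b < a" using top_less[OF p, of v' b u' a] u v ua vb l eq by auto
    ultimately have ab: "a = b" by simp
    then have "word_val p u' = word_val p v'" using eq ua vb l by (simp add: val_snoc)
    then have "u' = v'" using Suc.IH u v ua vb l lu WW_butlast by auto
    then show "u = v" using ua vb ab by simp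
  qed
qed

lemma val_inj:
  assumes p: "p \<ge> 5" and u: "WW p u" and v: "WW p v" and eq: "word_val p u = word_val p v"
  shows "u = v"
proof -
  have "length u = length v"
    using val_len_less[OF p u v] val_len_less[OF p v u] eq by (metis less_irrefl nat_neq_iff)
  then show ?thesis using val_inj_len[OF p] u v eq by blast
qed

lemma P1_len:
  assumes p: "p \<ge> 5"
  shows "\<forall>u v a b. length u = n \<longrightarrow> WW p (a # u) \<longrightarrow> WW p (b # v) \<longrightarrow> word_val p u < word_val p v
     \<longrightarrow> word_val p (a # u) < word_val p (b # v)"
proof (induction n)
  case 0
  show ?case
  proof (intro allI impI)
    fix u v :: "nat list" and a b
    assume "length u = 0" "WW p (a # u)" "WW p (b # v)" "word_val p u < word_val p v"
    then show "word_val p (a # u) < word_val p (b # v)"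
      using val_len_less[OF p, of "a # u" "b # v"] by (cases v) auto
  qed
next
  case (Suc n)
  show ?case
  proof (intro allI impI)
    fix u v :: "nat list" and a b
    assume lu: "length u = Suc n" and au: "WW p (a # u)" and bv: "WW p (b # v)" and lt: "word_val p u < word_val p v"
    have u: "WW p u" and v: "WW p v" using au bv WW_Cons by auto
    have "\<not> length v < length u" using val_len_less[OF p v u] lt by auto
    show "word_val p (a # u) < word_val p (b # v)"
    proof (cases "length u < length v")
      case True then show ?thesis using val_len_less[OF p au bv] by simp
    next
      case False
      then have l: "length v = Suc n" using \<open>\<not> length v < length u\<close> lu by simp
      obtain u' c where uc: "u = u' @ [c]" using lu by (cases u rule: rev_exhaust) auto
      obtain v' e where ve: "v = v' @ [e]" using l by (cases v rule: rev_exhaust) auto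
      have l': "length u' = length v'" using lu l uc ve by simp
      have "\<not> e < c" using top_less[OF p, of v' e u' c] u v uc ve l' lt by auto
      then consider "c < e" | "c = e" by linarith
      then show ?thesis
      proof cases
        case 1
        have "WW p ((a # u') @ [c])" "WW p ((b # v') @ [e])" using au bv uc ve by auto
        from top_less[OF p this] show ?thesis using uc ve l' 1 by simp
      next
        case 2
        have "word_val p u' < word_val p v'" using lt uc ve l' 2 by (simp add: val_snoc)
        moreover have "WW p (a # u')" "WW p (b # v')" using au bv uc ve WW_butlast[of p "a # u'"] WW_butlast[of p "b # v'"] by auto
        ultimately have "word_val p (a # u') < word_val p (b # v')" using Suc.IH lu uc by auto
        then show ?thesis using uc ve l' 2 val_snoc[of p "a # u'" c] val_snoc[of p "b # v'" e] by simp
      qed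
    qed
  qed
qed

lemma P1:
  assumes "p \<ge> 5" "WW p (a # u)" "WW p (b # v)" "word_val p u < word_val p v"
  shows "word_val p (a # u) < word_val p (b # v)"
  using P1_len[OF assms(1), of "length u"] assms by blast

lemma div_bounds:
  fixes t m c e :: int
  assumes "m > 0" "c * m \<le> t" "t < e * m"
  shows "c \<le> t div m \<and> t div m < e"
proof -
  have eq: "t = (t div m) * m + t mod m" by simp
  have r: "0 \<le> t mod m" "t mod m < m" using assms(1) by auto
  have "c \<le> t div m"
  proof (rule ccontr)
    assume "\<not> c \<le> t div m"
    then have "t div m + 1 \<le> c" by simp
    then have "(t div m + 1) * m \<le> c * m" using assms(1) by (intro mult_right_mono) auto
    moreover have "(t div m + 1) * m = (t div m) * m + m" by (simp add: algebra_simps)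
    ultimately show False using eq r assms(2) by linarith
  qed
  moreover have "t div m < e"
  proof (rule ccontr)
    assume "\<not> t div m < e"
    then have "e * m \<le> (t div m) * m" using assms(1) by (intro mult_right_mono) auto
    then show False using eq r assms(3) by linarith
  qed
  ultimately show ?thesis by simp
qed

lemma exist_aux:
  assumes p: "p \<ge> 5"
  shows "(\<forall>n. SS p k \<le> n \<and> n \<le> SS p (Suc k) - 1 \<longrightarrow> (\<exists>w. WW p w \<and> length w = k \<and> word_val p w = n)) \<and>
         (\<forall>n. SS p k \<le> n \<and> n \<le> (int p - 3) * SS p k \<longrightarrow> (\<exists>w. WW p w \<and> \<not> xtop p w \<and> length w = k \<and> word_val p w = n))"
proof (induction k)
  case 0
  show ?case by (auto simp: SS_def WW_def intro!: exI[of _ "[]"])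
next
  case (Suc k)
  define m where "m = metallic p k"
  have mpos: "m \<ge> 1" using m_pos[OF p] m_def by simp
  have Sk: "SS p k \<ge> 0" using SS_nonneg[OF p] by simp
  have S1: "SS p (Suc k) = SS p k + m" by (simp add: SS_Suc m_def)
  have S2: "SS p (Suc (Suc k)) = SS p (Suc k) + metallic p (Suc k)" by (simp add: SS_Suc)
  have Id: "(int p - 2) * m + (int p - 3) * SS p k + 1 = SS p (Suc (Suc k))" using SS_Id[OF p] m_def by simp
  have IHD: "\<And>n. SS p k \<le> n \<Longrightarrow> n \<le> SS p (Suc k) - 1 \<Longrightarrow> \<exists>w. WW p w \<and> length w = k \<and> word_val p w = n"
    using Suc by blast
  have IHC: "\<And>n. SS p k \<le> n \<Longrightarrow> n \<le> (int p - 3) * SS p k \<Longrightarrow> \<exists>w. WW p w \<and> \<not> xtop p w \<and> length w = k \<and> word_val p w = n"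
    using Suc by blast
  have small: "\<exists>w. WW p w \<and> length w = k \<and> word_val p (w @ [nat q]) = n \<and> 1 \<le> q \<and> int (nat q) = q"
    if "1 \<le> q" "q = (n - SS p k) div m" "SS p k \<le> n" for n q
  proof -
    define r where "r = (n - SS p k) mod m"
    have r: "0 \<le> r" "r < m" using mpos r_def by auto
    have "q * m + r = n - SS p k" unfolding that(2) r_def by (rule div_mult_mod_eq)
    then have eq: "n = SS p k + r + q * m" by linarith
    obtain w where w: "WW p w" "length w = k" "word_val p w = SS p k + r"
      using IHD[of "SS p k + r"] r S1 by auto
    have qq: "int (nat q) = q" using that(1) by simp
    have "word_val p (w @ [nat q]) = n" using w eq qq by (simp add: val_snoc m_def)
    then show ?thesis using w that qq by blast
  qed
  have partD: "\<exists>w. WW p w \<and> length w = Suc k \<and> word_val p w = n"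
    if n1: "SS p (Suc k) \<le> n" and n2: "n \<le> SS p (Suc (Suc k)) - 1" for n
  proof (cases "n - SS p k < (int p - 2) * m")
    case True
    define q where "q = (n - SS p k) div m"
    have qb: "1 \<le> q \<and> q < int p - 2" using div_bounds[of m 1 "n - SS p k" "int p - 2"] mpos n1 S1 True q_def by simp
    obtain w where w: "WW p w" "length w = k" "word_val p (w @ [nat q]) = n"
      using small[of q n] qb q_def n1 S1 mpos by auto
    have "1 \<le> nat q \<and> nat q < p - 2" using qb p by (auto simp: nat_less_iff of_nat_diff)
    then have "WW p (w @ [nat q])" using w by (simp add: WW_snoc)
    then show ?thesis using w by (intro exI[of _ "w @ [nat q]"]) simp
  next
    case False
    obtain w where w: "WW p w" "\<not> xtop p w" "length w = k" "word_val p w = n - (int p - 2) * m"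
      using IHC[of "n - (int p - 2) * m"] False n2 Id by (auto simp: algebra_simps)
    have "WW p (w @ [p - 2])" using w p by (simp add: WW_snoc)
    moreover have "word_val p (w @ [p - 2]) = n" using w p by (simp add: val_snoc m_def of_nat_diff)
    ultimately show ?thesis using w by (intro exI[of _ "w @ [p - 2]"]) simp
  qed
  have partC: "\<exists>w. WW p w \<and> \<not> xtop p w \<and> length w = Suc k \<and> word_val p w = n"
    if n1: "SS p (Suc k) \<le> n" and n2: "n \<le> (int p - 3) * SS p (Suc k)" for n
  proof (cases "n - SS p k < (int p - 3) * m")
    case True
    define q where "q = (n - SS p k) div m"
    have qb: "1 \<le> q \<and> q < int p - 3" using div_bounds[of m 1 "n - SS p k" "int p - 3"] mpos n1 S1 True q_def by simp
    obtain w where w: "WW p w" "length w = k" "word_val p (w @ [nat q]) = n"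
      using small[of q n] qb q_def n1 S1 mpos by auto
    have qn: "1 \<le> nat q \<and> nat q < p - 3" using qb p by (auto simp: nat_less_iff of_nat_diff)
    have q3: "nat q \<le> p - 2" "nat q \<noteq> p - 2" "nat q \<noteq> p - 3" "1 \<le> nat q" using qn p by linarith+
    then have "WW p (w @ [nat q])" using w by (simp add: WW_snoc)
    moreover have "\<not> xtop p (w @ [nat q])" using q3 by (simp add: xtop_snoc)
    ultimately show ?thesis using w by (intro exI[of _ "w @ [nat q]"]) simp
  next
    case False
    obtain w where w: "WW p w" "\<not> xtop p w" "length w = k" "word_val p w = n - (int p - 3) * m"
      using IHC[of "n - (int p - 3) * m"] False n2 S1 by (auto simp: algebra_simps)
    have "Suc 0 \<le> p - 3" "p - 3 \<le> p - 2" "p - 3 \<noteq> p - 2" using p by auto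
    then have "WW p (w @ [p - 3])" using w by (simp add: WW_snoc)
    moreover have "\<not> xtop p (w @ [p - 3])" using w p by (simp add: xtop_snoc)
    moreover have "word_val p (w @ [p - 3]) = n" using w p by (simp add: val_snoc m_def of_nat_diff)
    ultimately show ?thesis using w by (intro exI[of _ "w @ [p - 3]"]) simp
  qed
  show ?case using partD partC by blast
qed

lemma exists_word:
  assumes p: "p \<ge> 5" and n: "n \<ge> 0"
  shows "\<exists>w. WW p w \<and> word_val p w = n"
proof -
  have ex: "\<exists>k. n < SS p k" using SS_ge[OF p, of "Suc (nat n)"] n by (intro exI[of _ "Suc (nat n)"]) simp
  define k0 where "k0 = (LEAST k. n < SS p k)"
  have k0: "n < SS p k0" using LeastI_ex[OF ex] k0_def by simp
  have "k0 \<noteq> 0"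
  proof
    assume "k0 = 0" then show False using k0 n by simp
  qed
  then obtain k where k: "k0 = Suc k" by (cases k0) auto
  have "\<not> n < SS p k" using not_less_Least[of k "\<lambda>k. n < SS p k"] k k0_def by simp
  then have "SS p k \<le> n \<and> n \<le> SS p (Suc k) - 1" using k0 k by simp
  then show ?thesis using exist_aux[OF p, of k] by blast
qed

definition code :: "nat \<Rightarrow> nat \<Rightarrow> nat list" where
  "code p n = (if n = 0 then [] else nzm_code p n)"

lemma val_nonneg: "p \<ge> 5 \<Longrightarrow> WW p w \<Longrightarrow> word_val p w \<ge> 0"
  using val_lower SS_nonneg order_trans by blast

lemma nzm_code_spec:
  assumes p: "p \<ge> 5" and n: "n > 0"
  shows "nzm_word p (nzm_code p n) \<and> word_val p (nzm_code p n) = int n"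
proof -
  obtain w where w: "WW p w" "word_val p w = int n" using exists_word[OF p, of "int n"] by auto
  have "w \<noteq> []" using w n by auto
  then have nw: "nzm_word p w" using w nzm_word_WW by simp
  have "nzm_code p n = w" unfolding nzm_code_def
  proof (rule the_equality)
    show "nzm_word p w \<and> word_val p w = int n" using nw w by simp
  next
    fix v assume "nzm_word p v \<and> word_val p v = int n"
    then show "v = w" using val_inj[OF p, of v w] w nzm_word_WW by auto
  qed
  then show ?thesis using nw w by simp
qed

lemma code_spec: "p \<ge> 5 \<Longrightarrow> WW p (code p n) \<and> word_val p (code p n) = int n"
  using nzm_code_spec[of p n] by (cases "n = 0") (auto simp: code_def nzm_word_WW WW_def)

lemma code_WW: "p \<ge> 5 \<Longrightarrow> WW p (code p n)" using code_spec by blast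
lemma code_val: "p \<ge> 5 \<Longrightarrow> word_val p (code p n) = int n" using code_spec by blast

lemma code_of: assumes p: "p \<ge> 5" and w: "WW p w" shows "code p (nat (word_val p w)) = w"
proof -
  have "word_val p (code p (nat (word_val p w))) = word_val p w"
    using code_val[OF p] val_nonneg[OF p w] by simp
  then show ?thesis using val_inj[OF p code_WW[OF p] w] by simp
qed

lemma code_eq: assumes p: "p \<ge> 5" "WW p w" "word_val p w = int n" shows "code p n = w"
  using code_of[OF p(1,2)] p(3) by simp

lemma WW_one: assumes "p \<ge> 5" "WW p w" shows "WW p (1 # w)"
proof -
  have "Suc 0 \<le> p - 2" "Suc 0 \<noteq> p - 2" using assms(1) by auto
  then show ?thesis using assms(2) by (simp add: WW_Cons)
qed

definition sv :: "nat \<Rightarrow> nat \<Rightarrow> int" where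
  "sv p n = word_val p (1 # code p n)"

definition xp :: "nat \<Rightarrow> nat \<Rightarrow> nat" where
  "xp p k = (if hf p ((p - 2) # code p k) then p - 3 else p - 2)"

lemma xp_WW: assumes p: "p \<ge> 5" shows "WW p (xp p k # code p k)"
proof (cases "hf p ((p - 2) # code p k)")
  case True
  have "p - 3 \<noteq> p - 2" "1 \<le> p - 3" "p - 3 \<le> p - 2" using p by auto
  then show ?thesis using True code_WW[OF p, of k] by (simp add: xp_def WW_Cons)
next
  case False
  have "1 \<le> p - 2" using p by auto
  then show ?thesis using False code_WW[OF p, of k] by (simp add: xp_def WW_def)
qed

lemma xp_range: "p \<ge> 5 \<Longrightarrow> xp p k = p - 3 \<or> xp p k = p - 2" by (simp add: xp_def)

lemma NT1:
  assumes p: "p \<ge> 5"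
  shows "sv p (Suc k) = sv p k + int (xp p k)"
proof -
  define w where "w = code p k"
  define x' where "x' = xp p k"
  have wW: "WW p w" and wv: "word_val p w = int k" using code_spec[OF p] w_def by auto
  have xW: "WW p (x' # w)" using xp_WW[OF p] w_def x'_def by simp
  define n where "n = word_val p (x' # w) + 1"
  have n0: "n \<ge> 1" using val_nonneg[OF p xW] n_def by simp
  define c where "c = code p (nat n)"
  have cW: "WW p c" and cv: "word_val p c = n" using code_spec[OF p, of "nat n"] c_def n0 by auto
  have "c \<noteq> []" using cv n0 by auto
  then obtain a u where cau: "c = a # u" by (cases c) auto
  have auW: "WW p (a # u)" using cW cau by simp
  have a1: "1 \<le> a" "a \<le> p - 2" using auW by (auto simp: WW_Cons)
  have uW: "WW p u" using auW by (simp add: WW_Cons)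
  have ugt: "word_val p u > int k"
  proof (rule ccontr)
    assume "\<not> word_val p u > int k"
    then consider "word_val p u < word_val p w" | "word_val p u = word_val p w" using wv by linarith
    then show False
    proof cases
      case 1
      then have "word_val p (a # u) < word_val p (x' # w)" using P1[OF p auW xW] by simp
      then show False using cv cau n_def by simp
    next
      case 2
      then have "u = w" using val_inj[OF p uW wW] by simp
      then have "int a = int x' + 1" using cv cau n_def val_Cons_diff[of p a w x'] by simp
      then have "x' = p - 3" "a = p - 2" using xp_range[OF p, of k] x'_def a1 p by auto
      then have "hf p ((p - 2) # w)" using x'_def xp_def w_def p by (auto split: if_splits)
      then show False using auW \<open>u = w\<close> \<open>a = p - 2\<close> by (simp add: WW_def)
    qed
  qed
  define c1 where "c1 = code p (Suc k)"
  have c1W: "WW p c1" and c1v: "word_val p c1 = int (Suc k)" using code_spec[OF p] c1_def by auto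
  have oneW: "WW p (1 # c1)" using WW_one[OF p c1W] .
  have ge: "word_val p (1 # c1) \<ge> n"
  proof -
    have "word_val p (x' # w) < word_val p (1 # c1)" using P1[OF p xW oneW] wv c1v by simp
    then show ?thesis using n_def by simp
  qed
  have le: "word_val p (1 # c1) \<le> n"
  proof (cases "word_val p u = int (Suc k)")
    case True
    then have "u = c1" using val_inj[OF p uW c1W] c1v by simp
    then show ?thesis using val_Cons_diff[of p 1 u a] a1 cv cau by simp
  next
    case False
    then have "word_val p c1 < word_val p u" using ugt c1v by simp
    then have "word_val p (1 # c1) < word_val p (a # u)" using P1[OF p oneW auW] by simp
    then show ?thesis using cv cau by simp
  qed
  have "sv p (Suc k) = n" using ge le sv_def c1_def by simp
  moreover have "sv p k = n - int x'" using sv_def w_def n_def val_Cons_diff[of p 1 w x'] by simp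
  ultimately show ?thesis using x'_def by simp
qed

lemma xbot_WW_hf: "WW p w \<Longrightarrow> hf p ((p - 2) # w) \<longleftrightarrow> xbot p w"
  by (simp add: WW_def)

lemma NT2:
  assumes p: "p \<ge> 5"
  shows "hf p ((p - 2) # code p k) \<longleftrightarrow> (\<exists>\<mu>\<ge>1. sv p \<mu> = int (Suc k))"
proof
  assume h: "hf p ((p - 2) # code p k)"
  have wW: "WW p (code p k)" and wv: "word_val p (code p k) = int k" using code_spec[OF p] by auto
  have xb: "xbot p (code p k)" using h wW xbot_WW_hf by blast
  then obtain a u where au: "code p k = a # u" by (cases "code p k") auto
  have aW: "WW p (a # u)" using wW au by simp
  have uW: "WW p u" using aW by (simp add: WW_Cons)
  have acase: "a = p - 2 \<or> (a = p - 3 \<and> xbot p u)" using xb au by simp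
  define c where "c = code p (Suc k)"
  have cW: "WW p c" and cv: "word_val p c = int (Suc k)" using code_spec[OF p] c_def by auto
  have "c \<noteq> []" using cv by auto
  then obtain b u' where cb: "c = b # u'" by (cases c) auto
  have bW: "WW p (b # u')" using cW cb by simp
  have u'W: "WW p u'" using bW by (simp add: WW_Cons)
  have b1: "1 \<le> b" "b \<le> p - 2" using bW by (auto simp: WW_Cons)
  have vgt: "word_val p (b # u') > word_val p (a # u)" using cv cb wv au by simp
  have "\<not> word_val p u' < word_val p u"
    using P1[OF p bW aW] vgt by auto
  moreover have "word_val p u' \<noteq> word_val p u"
  proof
    assume "word_val p u' = word_val p u"
    then have "u' = u" using val_inj[OF p u'W uW] by simp
    then have "b > a" using vgt val_Cons_diff[of p b u a] by simp
    then have "a = p - 3" "b = p - 2" "xbot p u" using acase b1 p by auto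
    then show False using bW \<open>u' = u\<close> by (simp add: WW_Cons)
  qed
  ultimately have ult: "word_val p u' > word_val p u" by simp
  have b1': "b = 1"
  proof (rule ccontr)
    assume "b \<noteq> 1"
    have oW: "WW p (1 # u')" using WW_one[OF p u'W] .
    have "word_val p (1 # u') < word_val p (b # u')" using val_Cons_diff[of p 1 u' b] \<open>b \<noteq> 1\<close> b1 by simp
    moreover have "word_val p (a # u) < word_val p (1 # u')" using P1[OF p aW oW] ult by simp
    ultimately show False using cv cb wv au by simp
  qed
  have "word_val p u \<ge> 0" using val_nonneg[OF p uW] .
  then have pos: "word_val p u' \<ge> 1" using ult by simp
  define \<mu> where "\<mu> = nat (word_val p u')"
  have "code p \<mu> = u'" using code_of[OF p u'W] \<mu>_def by simp
  then have "sv p \<mu> = int (Suc k)" using sv_def cv cb b1' by simp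
  moreover have "\<mu> \<ge> 1" using pos \<mu>_def by simp
  ultimately show "\<exists>\<mu>\<ge>1. sv p \<mu> = int (Suc k)" by blast
next
  assume "\<exists>\<mu>\<ge>1. sv p \<mu> = int (Suc k)"
  then obtain mu where mu: "mu \<ge> 1" "sv p mu = int (Suc k)" by blast
  then obtain j where "mu = Suc j" by (cases mu) auto
  then have sj: "sv p (Suc j) = int (Suc k)" using mu by simp
  have jW: "WW p (code p j)" and jv: "word_val p (code p j) = int j" using code_spec[OF p] by auto
  have xW: "WW p (xp p j # code p j)" using xp_WW[OF p] .
  have "word_val p (xp p j # code p j) = sv p j - 1 + int (xp p j)"
    using sv_def val_Cons_diff[of p "xp p j" "code p j" 1] by simp
  also have "\<dots> = int k" using NT1[OF p, of j] sj by simp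
  finally have "code p k = xp p j # code p j" using code_eq[OF p xW] by simp
  moreover have "hf p ((p - 2) # xp p j # code p j)"
  proof (cases "hf p ((p - 2) # code p j)")
    case True
    then have "xbot p (code p j)" using xbot_WW_hf[OF jW] by simp
    then show ?thesis using True by (simp add: xp_def)
  next
    case False
    then show ?thesis by (simp add: xp_def)
  qed
  ultimately show "hf p ((p - 2) # code p k)" by simp
qed

definition sn :: "nat \<Rightarrow> nat \<Rightarrow> nat" where "sn p n = nat (sv p n)"
definition Bl :: "nat \<Rightarrow> nat \<Rightarrow> bool" where "Bl p v = (\<exists>\<mu>\<ge>1. sn p \<mu> = v)"
definition dgf :: "nat \<Rightarrow> nat \<Rightarrow> nat" where "dgf p v = (if Bl p v then p - 3 else p - 2)"

lemma sv_ge1: assumes p: "p \<ge> 5" shows "sv p n \<ge> 1"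
proof -
  have W: "WW p (1 # code p n)" using WW_one[OF p code_WW[OF p]] .
  have "SS p (length (1 # code p n)) \<ge> int (length (1 # code p n))" using SS_ge[OF p] .
  then show ?thesis using val_lower[OF p W] sv_def by simp
qed

lemma sv_sn: "p \<ge> 5 \<Longrightarrow> sv p n = int (sn p n)"
  using sv_ge1[of p n] by (simp add: sn_def)

lemma sn_0: "p \<ge> 5 \<Longrightarrow> sn p 0 = 1"
  by (simp add: sn_def sv_def code_def word_val_def)

lemma sn_rec: assumes p: "p \<ge> 5" shows "sn p (Suc k) = sn p k + dgf p (Suc k)"
proof -
  have "hf p ((p - 2) # code p k) \<longleftrightarrow> Bl p (Suc k)"
    using NT2[OF p, of k] unfolding Bl_def sv_sn[OF p] by (metis of_nat_eq_iff)
  then have "xp p k = dgf p (Suc k)" by (simp add: xp_def dgf_def)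
  then show ?thesis using NT1[OF p, of k] sv_sn[OF p] by simp
qed

lemma dgf_ge: "p \<ge> 5 \<Longrightarrow> dgf p v \<ge> 2" by (auto simp: dgf_def)

lemma sn_smono: assumes p: "p \<ge> 5" shows "strict_mono (sn p)"
  unfolding strict_mono_Suc_iff
proof
  fix n show "sn p n < sn p (Suc n)" using sn_rec[OF p, of n] dgf_ge[OF p, of "Suc n"] by simp
qed

lemma sn_gt: assumes p: "p \<ge> 5" shows "sn p k > k"
proof (induction k)
  case 0 then show ?case using sn_0[OF p] by simp
next
  case (Suc k) then show ?case using sn_rec[OF p, of k] dgf_ge[OF p, of "Suc k"] by simp
qed

lemma Bl_range: assumes p: "p \<ge> 5" and v: "sn p k < v" "v \<le> sn p (Suc k)"
  shows "Bl p v \<longleftrightarrow> v = sn p (Suc k)"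
proof
  assume "Bl p v"
  then obtain mu where mu: "mu \<ge> 1" "sn p mu = v" by (auto simp: Bl_def)
  have "k < mu" using v mu strict_mono_less[OF sn_smono[OF p], of k mu] by simp
  moreover have "mu \<le> Suc k" using v mu strict_mono_less_eq[OF sn_smono[OF p], of mu "Suc k"] by simp
  ultimately have "mu = Suc k" by simp
  then show "v = sn p (Suc k)" using mu by simp
qed (auto simp: Bl_def)

lemma not_Bl_1: assumes p: "p \<ge> 5" shows "\<not> Bl p 1"
  unfolding Bl_def
proof clarify
  fix mu assume "1 \<le> mu" "sn p mu = 1"
  with sn_gt[OF p, of mu] show False by simp
qed

lemma fst_build_Suc: "fst (build p \<alpha> (Suc k)) = fst (build p \<alpha> k) + (if snd (build p \<alpha> k) (Suc k) then p - 2 else p - 3)"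
  by (cases "build p \<alpha> k") (simp add: Let_def)

lemma snd_build_Suc: "snd (build p \<alpha> (Suc k)) v = (if fst (build p \<alpha> k) \<le> v \<and> v < fst (build p \<alpha> (Suc k))
   then v \<noteq> fst (build p \<alpha> k) + \<alpha> (Suc k) - 1 else snd (build p \<alpha> k) v)"
  by (cases "build p \<alpha> k") (simp add: Let_def)

lemma fst_mono: "k \<le> t \<Longrightarrow> fst (build p \<alpha> k) \<le> fst (build p \<alpha> t)"
proof (induction t)
  case 0 then show ?case by simp
next
  case (Suc t) then show ?case using fst_build_Suc[of p \<alpha> t] by (cases "k = Suc t") auto
qed

lemma frame: "k \<le> t \<Longrightarrow> v < fst (build p \<alpha> k) \<Longrightarrow> snd (build p \<alpha> t) v = snd (build p \<alpha> k) v"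
proof (induction t)
  case 0 then show ?case by simp
next
  case (Suc t)
  show ?case
  proof (cases "k = Suc t")
    case False
    then have "k \<le> t" using Suc by simp
    then have "v < fst (build p \<alpha> t)" using fst_mono[of k t p \<alpha>] Suc by simp
    then show ?thesis using Suc \<open>k \<le> t\<close> snd_build_Suc[of p \<alpha> t v] by simp
  qed simp
qed

lemma INV:
  assumes p: "p \<ge> 5"
  shows "(\<forall>\<mu>. 1 \<le> \<mu> \<and> \<mu> \<le> k \<longrightarrow> \<alpha> \<mu> = dgf p \<mu>) \<Longrightarrow>
    fst (build p \<alpha> k) = sn p k + 1 \<and> (\<forall>v. 1 \<le> v \<and> v \<le> sn p k \<longrightarrow> snd (build p \<alpha> k) v = (\<not> Bl p v))"
proof (induction k)
  case 0 then show ?case using sn_0[OF p] not_Bl_1[OF p] by auto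
next
  case (Suc k)
  have IH: "fst (build p \<alpha> k) = sn p k + 1" "\<And>v. 1 \<le> v \<Longrightarrow> v \<le> sn p k \<Longrightarrow> snd (build p \<alpha> k) v = (\<not> Bl p v)"
    using Suc by auto
  have col: "snd (build p \<alpha> k) (Suc k) = (\<not> Bl p (Suc k))" using IH(2)[of "Suc k"] sn_gt[OF p, of k] by simp
  have F: "fst (build p \<alpha> (Suc k)) = sn p (Suc k) + 1"
    using fst_build_Suc[of p \<alpha> k] col IH(1) sn_rec[OF p, of k] by (simp add: dgf_def)
  have A: "\<alpha> (Suc k) = dgf p (Suc k)" using Suc.prems by simp
  have "snd (build p \<alpha> (Suc k)) v = (\<not> Bl p v)" if v: "1 \<le> v" "v \<le> sn p (Suc k)" for v
  proof (cases "sn p k + 1 \<le> v")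
    case True
    have "snd (build p \<alpha> (Suc k)) v = (v \<noteq> sn p (Suc k))"
      using snd_build_Suc[of p \<alpha> k v] IH(1) F True v A sn_rec[OF p, of k] by simp
    also have "\<dots> = (\<not> Bl p v)" using Bl_range[OF p, of k v] True v by simp
    finally show ?thesis .
  next
    case False
    then show ?thesis using snd_build_Suc[of p \<alpha> k v] IH F v by simp
  qed
  then show ?case using F by blast
qed

lemma step_fst:
  assumes p: "p \<ge> 5" and a: "\<forall>\<mu>. 1 \<le> \<mu> \<and> \<mu> \<le> k \<longrightarrow> \<alpha> \<mu> = dgf p \<mu>"
  shows "fst (build p \<alpha> (Suc k)) = sn p (Suc k) + 1"
proof -
  have IH: "fst (build p \<alpha> k) = sn p k + 1" "\<And>v. 1 \<le> v \<Longrightarrow> v \<le> sn p k \<Longrightarrow> snd (build p \<alpha> k) v = (\<not> Bl p v)"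
    using INV[OF p a] by auto
  have col: "snd (build p \<alpha> k) (Suc k) = (\<not> Bl p (Suc k))" using IH(2)[of "Suc k"] sn_gt[OF p, of k] by simp
  show ?thesis
    using fst_build_Suc[of p \<alpha> k] col IH(1) sn_rec[OF p, of k] by (simp add: dgf_def)
qed

lemma rho0_rightmost: assumes p: "p \<ge> 5" shows "is_rightmost p (dgf p)"
  unfolding is_rightmost_def
proof (intro allI impI)
  fix \<nu> :: nat assume "\<nu> \<ge> 1"
  then obtain k where k: "\<nu> = Suc k" by (cases \<nu>) auto
  have "fst (build p (dgf p) (Suc k)) = sn p (Suc k) + 1" using step_fst[OF p] by simp
  moreover have "fst (build p (dgf p) k) = sn p k + 1" using INV[OF p] by simp
  ultimately show "dgf p \<nu> = nsons p (dgf p) \<nu>" using k sn_rec[OF p, of k] by (simp add: nsons_def)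
qed

lemma rightmost_agree:
  assumes p: "p \<ge> 5" and r: "is_rightmost p \<rho>"
  shows "\<forall>\<mu>. 1 \<le> \<mu> \<and> \<mu> \<le> k \<longrightarrow> \<rho> \<mu> = dgf p \<mu>"
proof (induction k)
  case 0 then show ?case by simp
next
  case (Suc k)
  have "\<rho> (Suc k) = nsons p \<rho> (Suc k)" using r by (simp add: is_rightmost_def)
  also have "\<dots> = dgf p (Suc k)"
    using step_fst[OF p Suc] INV[OF p Suc] sn_rec[OF p, of k] by (simp add: nsons_def)
  finally show ?case using Suc by (auto simp: le_Suc_eq)
qed

lemma succ_eq:
  assumes p: "p \<ge> 5" and nu: "\<nu> \<ge> 1"
  shows "nzm_succ p \<nu> = sn p \<nu>"
proof -
  have cn: "nzm_code p \<nu> = code p \<nu>" using nu by (simp add: code_def)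
  have W: "WW p (1 # code p \<nu>)" using WW_one[OF p code_WW[OF p]] .
  have pos: "sn p \<nu> > 0" using sn_gt[OF p, of \<nu>] by simp
  have c1: "nzm_code p (sn p \<nu>) = 1 # code p \<nu>"
    using code_eq[OF p W, of "sn p \<nu>"] pos sv_sn[OF p, of \<nu>] by (simp add: sv_def code_def)
  show ?thesis unfolding nzm_succ_def
  proof (rule the_equality)
    show "0 < sn p \<nu> \<and> nzm_code p (sn p \<nu>) = 1 # nzm_code p \<nu>" using pos c1 cn by simp
  next
    fix n assume n: "0 < n \<and> nzm_code p n = 1 # nzm_code p \<nu>"
    then have "code p n = 1 # code p \<nu>" using cn by (simp add: code_def)
    then have "int n = sv p \<nu>" using code_val[OF p, of n] by (simp add: sv_def)
    then show "n = sn p \<nu>" using sv_sn[OF p] by simp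
  qed
qed

lemma son_hd:
  assumes p: "p \<ge> 5" and nu: "\<nu> = Suc k" and mu1: "sn p k < \<mu>" and mu2: "\<mu> \<le> sn p \<nu>"
    and h: "hd (nzm_code p \<mu>) = 1"
  shows "\<mu> = sn p \<nu>"
proof -
  have "\<mu> > 0" using mu1 by simp
  then have cm: "nzm_code p \<mu> = code p \<mu>" by (simp add: code_def)
  have cW: "WW p (code p \<mu>)" and cv: "word_val p (code p \<mu>) = int \<mu>" using code_spec[OF p] by auto
  have "code p \<mu> \<noteq> []" using cv \<open>\<mu> > 0\<close> by auto
  then obtain u where cu: "code p \<mu> = 1 # u" using h cm by (cases "code p \<mu>") auto
  have uW: "WW p u" using cW cu by (simp add: WW_Cons)
  have oW: "WW p (1 # u)" using cW cu by simp
  have kW: "WW p (1 # code p k)" using WW_one[OF p code_WW[OF p]] .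
  have nW: "WW p (1 # code p \<nu>)" using WW_one[OF p code_WW[OF p]] .
  have v1: "word_val p (1 # u) = int \<mu>" using cv cu by simp
  have sk: "word_val p (1 # code p k) = int (sn p k)" using sv_sn[OF p, of k] by (simp add: sv_def)
  have snu: "word_val p (1 # code p \<nu>) = int (sn p \<nu>)" using sv_sn[OF p, of \<nu>] by (simp add: sv_def)
  have a: "\<not> word_val p u < int k"
  proof
    assume "word_val p u < int k"
    then have "word_val p (1 # u) < word_val p (1 # code p k)" using P1[OF p oW kW] code_val[OF p] by simp
    then show False using v1 sk mu1 by simp
  qed
  have b: "word_val p u \<noteq> int k"
  proof
    assume "word_val p u = int k"
    then have "u = code p k" using val_inj[OF p uW code_WW[OF p]] code_val[OF p] by simp
    then show False using v1 sk mu1 by simp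
  qed
  have c: "\<not> word_val p u > int \<nu>"
  proof
    assume "word_val p u > int \<nu>"
    then have "word_val p (1 # code p \<nu>) < word_val p (1 # u)" using P1[OF p nW oW] code_val[OF p] by simp
    then show False using v1 snu mu2 by simp
  qed
  have "word_val p u = int \<nu>" using a b c nu by simp
  then have "u = code p \<nu>" using val_inj[OF p uW code_WW[OF p]] code_val[OF p] by simp
  then show ?thesis using v1 snu by simp
qed

lemma uniq_step:
  assumes p: "p \<ge> 5" and va: "valid_assignment p \<alpha>"
    and ss: "\<forall>\<nu>\<ge>1. is_son p \<alpha> \<nu> (sn p \<nu>)"
    and a: "\<forall>\<mu>. 1 \<le> \<mu> \<and> \<mu> \<le> k \<longrightarrow> \<alpha> \<mu> = dgf p \<mu>"
  shows "\<alpha> (Suc k) = dgf p (Suc k)"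
proof (rule ccontr)
  assume ne: "\<alpha> (Suc k) \<noteq> dgf p (Suc k)"
  have I1: "fst (build p \<alpha> k) = sn p k + 1" and I2: "\<And>v. 1 \<le> v \<Longrightarrow> v \<le> sn p k \<Longrightarrow> snd (build p \<alpha> k) v = (\<not> Bl p v)"
    using INV[OF p a] by auto
  have F1: "fst (build p \<alpha> (Suc k)) = sn p (Suc k) + 1" using step_fst[OF p a] .
  have SR: "sn p (Suc k) = sn p k + dgf p (Suc k)" using sn_rec[OF p] .
  have "nsons p \<alpha> (Suc k) = dgf p (Suc k)" using I1 F1 SR by (simp add: nsons_def)
  then have r: "1 \<le> \<alpha> (Suc k)" "\<alpha> (Suc k) < dgf p (Suc k)" using va ne unfolding valid_assignment_def
    by (metis le_neq_implies_less le_add1 plus_1_eq_Suc)+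
  define j where "j = sn p k + \<alpha> (Suc k)"
  have j1: "sn p k < j" "j < sn p (Suc k)" using r SR j_def by auto
  have kj: "Suc k < j" using sn_gt[OF p, of k] j1 by simp
  have colS: "snd (build p \<alpha> (Suc k)) v = (\<not> Bl p v)" if v: "1 \<le> v" "v < j" for v
  proof (cases "sn p k + 1 \<le> v")
    case True
    have "snd (build p \<alpha> (Suc k)) v = (v \<noteq> j)"
      using snd_build_Suc[of p \<alpha> k v] I1 F1 True v j1 j_def by simp
    moreover have "\<not> Bl p v" using Bl_range[OF p, of k v] True v j1 by simp
    ultimately show ?thesis using v by simp
  next
    case False
    then show ?thesis using snd_build_Suc[of p \<alpha> k v] I1 I2 v by simp
  qed
  have colj: "\<not> snd (build p \<alpha> (Suc k)) j"
    using snd_build_Suc[of p \<alpha> k j] I1 F1 j1 j_def r by simp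
  have claim: "Suc k \<le> t \<longrightarrow> t < j \<longrightarrow> fst (build p \<alpha> t) = sn p t + 1" for t
  proof (induction t)
    case 0 then show ?case by simp
  next
    case (Suc t)
    show ?case
    proof (intro impI)
      assume t1: "Suc k \<le> Suc t" and t2: "Suc t < j"
      show "fst (build p \<alpha> (Suc t)) = sn p (Suc t) + 1"
      proof (cases "t = k")
        case True then show ?thesis using F1 by simp
      next
        case False
        then have tk: "Suc k \<le> t" using t1 by simp
        then have IH: "fst (build p \<alpha> t) = sn p t + 1" using Suc t2 by simp
        have "snd (build p \<alpha> t) (Suc t) = snd (build p \<alpha> (Suc k)) (Suc t)"
          using frame[of "Suc k" t "Suc t" p \<alpha>] tk F1 t2 j1 by simp
        also have "\<dots> = (\<not> Bl p (Suc t))" using colS[of "Suc t"] t2 by simp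
        finally show ?thesis using fst_build_Suc[of p \<alpha> t] IH sn_rec[OF p, of t] by (simp add: dgf_def)
      qed
    qed
  qed
  obtain j' where jj: "j = Suc j'" using kj by (cases j) auto
  have Fj': "fst (build p \<alpha> j') = sn p j' + 1" using claim[of j'] jj kj by simp
  have "snd (build p \<alpha> j') j = snd (build p \<alpha> (Suc k)) j"
    using frame[of "Suc k" j' j p \<alpha>] jj kj F1 j1 by simp
  then have cj: "\<not> snd (build p \<alpha> j') j" using colj by simp
  have nb: "\<not> Bl p j" using Bl_range[OF p, of k j] j1 by simp
  have "fst (build p \<alpha> j) = sn p j' + 1 + (p - 3)" using fst_build_Suc[of p \<alpha> j'] jj Fj' cj by simp
  moreover have "sn p j = sn p j' + (p - 2)" using sn_rec[OF p, of j'] jj nb by (simp add: dgf_def)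
  ultimately have "fst (build p \<alpha> j) = sn p j" using p by simp
  moreover have "is_son p \<alpha> j (sn p j)" using ss jj by simp
  ultimately show False by (simp add: is_son_def)
qed

lemma uniq:
  assumes p: "p \<ge> 5" and va: "valid_assignment p \<alpha>"
    and ss: "\<forall>\<nu>\<ge>1. is_son p \<alpha> \<nu> (sn p \<nu>)"
  shows "\<forall>\<mu>. 1 \<le> \<mu> \<and> \<mu> \<le> k \<longrightarrow> \<alpha> \<mu> = dgf p \<mu>"
proof (induction k)
  case 0 then show ?case by simp
next
  case (Suc k)
  then show ?case using uniq_step[OF p va ss Suc] by (auto simp: le_Suc_eq)
qed

theorem theorem9:
  fixes p :: nat
  assumes "p \<ge> 5"
  shows "(\<exists>\<rho>. is_rightmost p \<rho>) \<and>
    (\<forall>\<rho>. is_rightmost p \<rho> \<longrightarrow>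
      (\<forall>\<nu>\<ge>1. is_son p \<rho> \<nu> (nzm_succ p \<nu>) \<and>
         (\<forall>\<mu>. is_son p \<rho> \<nu> \<mu> \<and> hd (nzm_code p \<mu>) = 1 \<longrightarrow> \<mu> = nzm_succ p \<nu>)) \<and>
      (\<forall>\<alpha>. valid_assignment p \<alpha> \<and> (\<forall>\<nu>\<ge>1. is_son p \<alpha> \<nu> (nzm_succ p \<nu>))
           \<longrightarrow> (\<forall>\<nu>\<ge>1. \<alpha> \<nu> = \<rho> \<nu>)))"
proof -
  note p = assms
  have part1: "\<exists>\<rho>. is_rightmost p \<rho>" using rho0_rightmost[OF p] by blast
  have part2: "(\<forall>\<nu>\<ge>1. is_son p \<rho> \<nu> (nzm_succ p \<nu>) \<and>
         (\<forall>\<mu>. is_son p \<rho> \<nu> \<mu> \<and> hd (nzm_code p \<mu>) = 1 \<longrightarrow> \<mu> = nzm_succ p \<nu>)) \<and>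
      (\<forall>\<alpha>. valid_assignment p \<alpha> \<and> (\<forall>\<nu>\<ge>1. is_son p \<alpha> \<nu> (nzm_succ p \<nu>))
           \<longrightarrow> (\<forall>\<nu>\<ge>1. \<alpha> \<nu> = \<rho> \<nu>))" if r: "is_rightmost p \<rho>" for \<rho>
  proof -
    have ag: "\<And>k. \<forall>\<mu>. 1 \<le> \<mu> \<and> \<mu> \<le> k \<longrightarrow> \<rho> \<mu> = dgf p \<mu>" using rightmost_agree[OF p r] by blast
    have ag1: "\<rho> \<nu> = dgf p \<nu>" if "\<nu> \<ge> 1" for \<nu> using ag[of \<nu>] that by blast
    have fb: "fst (build p \<rho> k) = sn p k + 1" for k using INV[OF p ag[of k]] by simp
    have A: "is_son p \<rho> \<nu> (nzm_succ p \<nu>) \<and>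
         (\<forall>\<mu>. is_son p \<rho> \<nu> \<mu> \<and> hd (nzm_code p \<mu>) = 1 \<longrightarrow> \<mu> = nzm_succ p \<nu>)" if nu: "\<nu> \<ge> 1" for \<nu>
    proof -
      obtain k where k: "\<nu> = Suc k" using nu by (cases \<nu>) auto
      have se: "nzm_succ p \<nu> = sn p \<nu>" using succ_eq[OF p nu] .
      have "sn p k < sn p \<nu>" using sn_rec[OF p, of k] dgf_ge[OF p, of "Suc k"] k by simp
      moreover have "fst (build p \<rho> (\<nu> - 1)) = sn p k + 1" using fb[of k] k by simp
      moreover have "fst (build p \<rho> \<nu>) = sn p \<nu> + 1" using fb[of \<nu>] by simp
      ultimately have s1: "is_son p \<rho> \<nu> (nzm_succ p \<nu>)" using se nu k unfolding is_son_def by linarith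
      have "\<mu> = nzm_succ p \<nu>" if "is_son p \<rho> \<nu> \<mu>" "hd (nzm_code p \<mu>) = 1" for \<mu>
      proof -
        have "fst (build p \<rho> (\<nu> - 1)) \<le> \<mu>" "\<mu> < fst (build p \<rho> \<nu>)" using that(1) by (auto simp: is_son_def)
        then have "sn p k < \<mu>" "\<mu> \<le> sn p \<nu>" using fb[of k] fb[of \<nu>] k by simp_all
        then show ?thesis using son_hd[OF p k, of \<mu>] that(2) se by simp
      qed
      then show ?thesis using s1 by blast
    qed
    have B: "\<forall>\<nu>\<ge>1. \<alpha> \<nu> = \<rho> \<nu>" if va: "valid_assignment p \<alpha>" and ss: "\<forall>\<nu>\<ge>1. is_son p \<alpha> \<nu> (nzm_succ p \<nu>)" for \<alpha>
    proof -
      have ss': "\<forall>\<nu>\<ge>1. is_son p \<alpha> \<nu> (sn p \<nu>)"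
      proof (intro allI impI)
        fix \<nu> :: nat assume "\<nu> \<ge> 1"
        then show "is_son p \<alpha> \<nu> (sn p \<nu>)" using ss succ_eq[OF p \<open>\<nu> \<ge> 1\<close>] by metis
      qed
      show ?thesis
      proof (intro allI impI)
        fix \<nu> :: nat assume nu: "\<nu> \<ge> 1"
        have "\<alpha> \<nu> = dgf p \<nu>" using uniq[OF p va ss', of \<nu>] nu by blast
        then show "\<alpha> \<nu> = \<rho> \<nu>" using ag1[OF nu] by simp
      qed
    qed
    show ?thesis
    proof (intro conjI allI impI)
      fix \<nu> :: nat assume "\<nu> \<ge> 1"
      then show "is_son p \<rho> \<nu> (nzm_succ p \<nu>)" using A by blast
    next
      fix \<nu> \<mu> :: nat assume "\<nu> \<ge> 1" "is_son p \<rho> \<nu> \<mu> \<and> hd (nzm_code p \<mu>) = 1"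
      then show "\<mu> = nzm_succ p \<nu>" using A by blast
    next
      fix \<alpha> \<nu> assume "valid_assignment p \<alpha> \<and> (\<forall>\<nu>\<ge>1. is_son p \<alpha> \<nu> (nzm_succ p \<nu>))" "(\<nu>::nat) \<ge> 1"
      then show "\<alpha> \<nu> = \<rho> \<nu>" using B by blast
    qed
  qed
  show ?thesis using part1 part2 by (intro conjI allI impI) auto
qed

end
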